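(* For every $k\ge1$, every clean universal $k$-URA $\mathcal A$ over $(\mathbb N;=)$ (over any finite alphabet), every configuration $C$ reachable in $\mathcal A$ and every location $\ell$ of $\mathcal A$, the number of states in $C$ with location $\ell$ is at most $(k\cdot4^k\cdot k!)^k$. In other words, $N_k\le(k\cdot 4^k\cdot k!)^k$.
   Context: Let $\Sigma$ be a finite alphabet; data words are finite sequences in $(\Sigma\times\mathbb N)^*$. Let $\mathbb N_\bot=\mathbb N\cup\{\bot\}$, $\bot$ equal only to itself. Register constraints over registers $\mathcal R$ are Boolean combinations of atoms $t_1=t_2$ with $t_i\in\{\#\}\cup\{r,\dot r:r\in\mathcal R\}$, interpreted on triples $(\mathbf u,d,\mathbf v)$ (current valuation, input datum, next valuation, valuations $\mathcal R\to\mathbb N_\bot$). A $k$-RA over $(\mathbb N;=)$ is $(\mathcal R,\mathcal L,\ell_{init},\mathcal L_{acc},E)$ with $|\mathcal R|=k$, finite locations, finite edges $(\ell,\sigma,\phi,\ell')$ whose constraints contain for each register $r$ a conjunct $\dot r=r$ or $\dot r=\#$. States are $\ell(\mathbf u)$; the initial state is $\ell_{init}$ with all registers $\bot$; $\ell(\mathbf u)\xrightarrow{\sigma,d}\ell'(\mathbf u')$ if some edge $(\ell,\sigma,\phi,\ell')$ has $(\mathbf u,d,\mathbf u')\models\phi$. A word is accepted from a state if some run on it from that state ends in a state with location in $\mathcal L_{acc}$; $L(\mathcal A)$: words accepted from the initial state; universal means $L(\mathcal A)=(\Sigma\times\mathbb N)^*$. A $k$-URA is a $k$-RA where each data word has at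 most one initialized accepting run. Clean: every reachable state $\ell(u_1,\dots,u_k)$ accepts some word and no element of $\mathbb N$ occurs in two different components of $(u_1,\dots,u_k)$. A configuration is a set of states; $\mathrm{succ}(C,(\sigma,d))$ is the set of states reachable by one transition on $(\sigma,d)$ from a state in $C$, extended to words; $C$ is reachable if $C=\mathrm{succ}(\{\text{initial state}\},w)$ for some data word $w$. $N_k$ denotes the supremum, over all clean universal $k$-URA $\mathcal A$ over $(\mathbb N;=)$ and all configurations $C$ reachable in $\mathcal A$, of the maximal number of distinct states in $C$ sharing the same location. *)

theory Defs
  imports Main
begin

text \<open>Registers are the elements of a finite type 'r (so k = CARD('r));
 a register valuation maps registers to N_bot, with None playing the role of bot.\<close>

type_synonym 'r valuation = "'r \<Rightarrow> nat option"

datatype 'r rterm = Dat | Cur 'r | Nxt 'r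

datatype 'r constr =
    CTrue
  | Atom "'r rterm" "'r rterm"
  | Neg "'r constr"
  | Conj "'r constr" "'r constr"
  | Disj "'r constr" "'r constr"

fun teval :: "'r rterm \<Rightarrow> 'r valuation \<Rightarrow> nat \<Rightarrow> 'r valuation \<Rightarrow> nat option" where
  "teval Dat u d v = Some d"
| "teval (Cur r) u d v = u r"
| "teval (Nxt r) u d v = v r"

fun sat :: "'r constr \<Rightarrow> 'r valuation \<Rightarrow> nat \<Rightarrow> 'r valuation \<Rightarrow> bool" where
  "sat CTrue u d v = True"
| "sat (Atom t1 t2) u d v = (teval t1 u d v = teval t2 u d v)"
| "sat (Neg \<phi>) u d v = (\<not> sat \<phi> u d v)"
| "sat (Conj \<phi> \<psi>) u d v = (sat \<phi> u d v \<and> sat \<psi> u d v)"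
| "sat (Disj \<phi> \<psi>) u d v = (sat \<phi> u d v \<or> sat \<psi> u d v)"

fun conjuncts :: "'r constr \<Rightarrow> 'r constr set" where
  "conjuncts (Conj \<phi> \<psi>) = conjuncts \<phi> \<union> conjuncts \<psi>"
| "conjuncts \<phi> = {\<phi>}"

record ('r, 'l, 's) ra =
  locs :: "'l set"
  linit :: 'l
  lacc :: "'l set"
  edges :: "('l \<times> 's \<times> 'r constr \<times> 'l) set"

definition is_ra :: "('r::finite, 'l, 's::finite) ra \<Rightarrow> bool" where
  "is_ra A \<longleftrightarrow> finite (locs A) \<and> linit A \<in> locs A \<and> lacc A \<subseteq> locs A
     \<and> finite (edges A)
     \<and> (\<forall>(l, \<sigma>, \<phi>, l') \<in> edges A. l \<in> locs A \<and> l' \<in> locs A \<and>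
          (\<forall>r. Atom (Nxt r) (Cur r) \<in> conjuncts \<phi> \<or> Atom (Cur r) (Nxt r) \<in> conjuncts \<phi>
             \<or> Atom (Nxt r) Dat \<in> conjuncts \<phi> \<or> Atom Dat (Nxt r) \<in> conjuncts \<phi>))"

type_synonym ('l, 'r) state = "'l \<times> 'r valuation"

definition init_state :: "('r, 'l, 's) ra \<Rightarrow> ('l, 'r) state" where
  "init_state A = (linit A, \<lambda>_. None)"

definition step :: "('r, 'l, 's) ra \<Rightarrow> ('l, 'r) state \<Rightarrow> 's \<times> nat \<Rightarrow> ('l, 'r) state \<Rightarrow> bool" where
  "step A q a q' \<longleftrightarrow> (\<exists>\<phi>. (fst q, fst a, \<phi>, fst q') \<in> edges A \<and> sat \<phi> (snd q) (snd a) (snd q'))"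

definition is_run :: "('r, 'l, 's) ra \<Rightarrow> ('l, 'r) state \<Rightarrow> ('s \<times> nat) list \<Rightarrow> ('l, 'r) state list \<Rightarrow> bool" where
  "is_run A q w qs \<longleftrightarrow> length qs = Suc (length w) \<and> qs ! 0 = q
     \<and> (\<forall>i < length w. step A (qs ! i) (w ! i) (qs ! Suc i))"

definition accepting_run :: "('r, 'l, 's) ra \<Rightarrow> ('l, 'r) state \<Rightarrow> ('s \<times> nat) list \<Rightarrow> ('l, 'r) state list \<Rightarrow> bool" where
  "accepting_run A q w qs \<longleftrightarrow> is_run A q w qs \<and> fst (last qs) \<in> lacc A"

definition accepts_from :: "('r, 'l, 's) ra \<Rightarrow> ('l, 'r) state \<Rightarrow> ('s \<times> nat) list \<Rightarrow> bool" where
  "accepts_from A q w \<longleftrightarrow> (\<exists>qs. accepting_run A q w qs)"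

definition universal :: "('r, 'l, 's) ra \<Rightarrow> bool" where
  "universal A \<longleftrightarrow> (\<forall>w. accepts_from A (init_state A) w)"

definition unambiguous :: "('r, 'l, 's) ra \<Rightarrow> bool" where
  "unambiguous A \<longleftrightarrow> (\<forall>w qs qs'. accepting_run A (init_state A) w qs
      \<longrightarrow> accepting_run A (init_state A) w qs' \<longrightarrow> qs = qs')"

definition reachable_state :: "('r, 'l, 's) ra \<Rightarrow> ('l, 'r) state \<Rightarrow> bool" where
  "reachable_state A q \<longleftrightarrow> (\<exists>w qs. is_run A (init_state A) w qs \<and> last qs = q)"

definition clean :: "('r, 'l, 's) ra \<Rightarrow> bool" where
  "clean A \<longleftrightarrow> (\<forall>q. reachable_state A q \<longrightarrow>
      (\<exists>w. accepts_from A q w) \<and>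
      (\<forall>r r'. r \<noteq> r' \<longrightarrow> snd q r \<noteq> None \<longrightarrow> snd q r \<noteq> snd q r'))"

definition succ :: "('r, 'l, 's) ra \<Rightarrow> ('l, 'r) state set \<Rightarrow> 's \<times> nat \<Rightarrow> ('l, 'r) state set" where
  "succ A C a = {q'. \<exists>q\<in>C. step A q a q'}"

definition succ_word :: "('r, 'l, 's) ra \<Rightarrow> ('l, 'r) state set \<Rightarrow> ('s \<times> nat) list \<Rightarrow> ('l, 'r) state set" where
  "succ_word A C w = fold (\<lambda>a C. succ A C a) w C"

definition reachable_config :: "('r, 'l, 's) ra \<Rightarrow> ('l, 'r) state set \<Rightarrow> bool" where
  "reachable_config A C \<longleftrightarrow> (\<exists>w. C = succ_word A {init_state A} w)"

end

theory Submission imports Defs begin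

definition vals :: "('r \<Rightarrow> nat option) \<Rightarrow> nat set" where
  "vals u = {c. \<exists>r. u r = Some c}"

lemma sat_conj: "\<psi> \<in> conjuncts \<phi> \<Longrightarrow> sat \<phi> u d v \<Longrightarrow> sat \<psi> u d v"
  by (induction \<phi> rule: conjuncts.induct) auto

lemma step_vals:
  assumes "is_ra A" "step A q a q'"
  shows "snd q' r = snd q r \<or> snd q' r = Some (snd a)"
proof -
  from assms(2) obtain \<phi> where e: "(fst q, fst a, \<phi>, fst q') \<in> edges A"
    and s: "sat \<phi> (snd q) (snd a) (snd q')" unfolding step_def by blast
  from assms(1) e have "Atom (Nxt r) (Cur r) \<in> conjuncts \<phi> \<or> Atom (Cur r) (Nxt r) \<in> conjuncts \<phi>
             \<or> Atom (Nxt r) Dat \<in> conjuncts \<phi> \<or> Atom Dat (Nxt r) \<in> conjuncts \<phi>"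
    unfolding is_ra_def by fastforce
  then show ?thesis using sat_conj[OF _ s] by fastforce
qed

lemma step_vals_sub:
  assumes "is_ra A" "step A q a q'"
  shows "vals (snd q') \<subseteq> vals (snd q) \<union> {snd a}"
  proof
  fix c assume "c \<in> vals (snd q')"
  then obtain r where "snd q' r = Some c" unfolding vals_def by blast
  then show "c \<in> vals (snd q) \<union> {snd a}" using step_vals[OF assms, of r] unfolding vals_def by auto
qed

lemma run_vals:
  assumes "is_ra A" "is_run A q x qs"
  shows "i < length qs \<Longrightarrow> vals (snd (qs!i)) \<subseteq> vals (snd q) \<union> snd ` set x"
proof (induction i)
  case 0
  then show ?case using assms(2) unfolding is_run_def by auto
next
  case (Suc i)
  have il: "i < length x" using Suc.prems assms(2) unfolding is_run_def by auto
  have "step A (qs!i) (x!i) (qs!Suc i)" using il assms(2) unfolding is_run_def by auto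
  from step_vals_sub[OF assms(1) this] have "vals (snd (qs!Suc i)) \<subseteq> vals (snd (qs!i)) \<union> {snd (x!i)}" .
  moreover have "snd (x!i) \<in> snd ` set x" using il by auto
  ultimately show ?case using Suc by auto
qed

lemma teval_map: "teval t (map_option f \<circ> u) (f d) (map_option f \<circ> v) = map_option f (teval t u d v)"
  by (cases t) auto

lemma mo_eq: "inj_on f V \<Longrightarrow> set_option a \<subseteq> V \<Longrightarrow> set_option b \<subseteq> V \<Longrightarrow>
   (map_option f a = map_option f b) = (a = b)"
  by (cases a; cases b) (auto simp: inj_on_def)

lemma teval_in: "set_option (teval t u d v) \<subseteq> vals u \<union> vals v \<union> {d}"
  by (cases t) (auto simp: vals_def)

lemma sat_map:
  assumes "inj_on f (vals u \<union> vals v \<union> {d})"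
  shows "sat \<phi> (map_option f \<circ> u) (f d) (map_option f \<circ> v) = sat \<phi> u d v"
proof (induction \<phi>)
  case (Atom t1 t2)
  show ?case by (simp only: sat.simps teval_map mo_eq[OF assms teval_in teval_in])
qed auto

definition mapst :: "(nat \<Rightarrow> nat) \<Rightarrow> ('l, 'r) state \<Rightarrow> ('l, 'r) state" where
  "mapst f q = (fst q, map_option f \<circ> snd q)"

definition mapw :: "(nat \<Rightarrow> nat) \<Rightarrow> ('s \<times> nat) list \<Rightarrow> ('s \<times> nat) list" where
  "mapw f x = map (\<lambda>a. (fst a, f (snd a))) x"

lemma run_map:
  assumes "is_ra A" "is_run A q x qs" "inj_on f (vals (snd q) \<union> snd ` set x)"
  shows "is_run A (mapst f q) (mapw f x) (map (mapst f) qs)"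
  unfolding is_run_def
proof (intro conjI allI impI)
  show "length (map (mapst f) qs) = Suc (length (mapw f x))"
    using assms(2) by (simp add: is_run_def mapw_def)
  show "map (mapst f) qs ! 0 = mapst f q" using assms(2) by (simp add: is_run_def)
  fix i assume "i < length (mapw f x)"
  then have il: "i < length x" by (simp add: mapw_def)
  have len: "length qs = Suc (length x)" using assms(2) by (simp add: is_run_def)
  have st: "step A (qs!i) (x!i) (qs!Suc i)" using il assms(2) unfolding is_run_def by auto
  then obtain \<phi> where e: "(fst (qs!i), fst (x!i), \<phi>, fst (qs!Suc i)) \<in> edges A"
    and s: "sat \<phi> (snd (qs!i)) (snd (x!i)) (snd (qs!Suc i))" unfolding step_def by blast
  have V: "vals (snd (qs!i)) \<union> vals (snd (qs!Suc i)) \<union> {snd (x!i)} \<subseteq> vals (snd q) \<union> snd ` set x"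
    using run_vals[OF assms(1,2), of i] run_vals[OF assms(1,2), of "Suc i"] il len by auto
  have inj: "inj_on f (vals (snd (qs!i)) \<union> vals (snd (qs!Suc i)) \<union> {snd (x!i)})"
    using inj_on_subset[OF assms(3) V] .
  show "step A (map (mapst f) qs ! i) (mapw f x ! i) (map (mapst f) qs ! Suc i)"
    unfolding step_def using e s sat_map[OF inj] il len
    by (auto simp: mapst_def mapw_def)
qed

lemma accepts_map:
  assumes "is_ra A" "accepts_from A q x" "inj_on f (vals (snd q) \<union> snd ` set x)"
  shows "accepts_from A (mapst f q) (mapw f x)"
proof -
  from assms(2) obtain qs where r: "is_run A q x qs" and a: "fst (last qs) \<in> lacc A"
    unfolding accepts_from_def accepting_run_def by blast
  have "qs \<noteq> []" using r by (auto simp: is_run_def)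
  then have "fst (last (map (mapst f) qs)) \<in> lacc A" using a by (simp add: last_map mapst_def)
  then show ?thesis using run_map[OF assms(1) r assms(3)]
    unfolding accepts_from_def accepting_run_def by blast
qed


lemma last_len: "length qs = Suc n \<Longrightarrow> last qs = qs ! n"
  by (cases qs rule: rev_cases) auto

lemma run_allD: "is_run A q w qs \<Longrightarrow> i < length w \<Longrightarrow> step A (qs ! i) (w ! i) (qs ! Suc i)"
  by (simp add: is_run_def)

lemma run_take:
  assumes "is_run A q (w@x) qs"
  shows "is_run A q w (take (Suc (length w)) qs)"
  unfolding is_run_def
proof (intro conjI allI impI)
  show "length (take (Suc (length w)) qs) = Suc (length w)" using assms by (auto simp: is_run_def)
  show "take (Suc (length w)) qs ! 0 = q" using assms by (auto simp: is_run_def)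
  fix i assume i: "i < length w"
  have "step A (qs!i) ((w@x)!i) (qs!Suc i)" using run_allD[OF assms, of i] i by simp
  then show "step A (take (Suc (length w)) qs ! i) (w ! i) (take (Suc (length w)) qs ! Suc i)"
    using i by (simp add: nth_append)
qed

lemma run_drop:
  assumes "is_run A q (w@x) qs"
  shows "is_run A (qs ! length w) x (drop (length w) qs)"
  unfolding is_run_def
proof (intro conjI allI impI)
  show "length (drop (length w) qs) = Suc (length x)" using assms by (auto simp: is_run_def)
  show "drop (length w) qs ! 0 = qs ! length w" using assms by (auto simp: is_run_def)
  fix i assume "i < length x"
  then have "step A (qs ! (length w + i)) ((w@x) ! (length w + i)) (qs ! Suc (length w + i))"
    using run_allD[OF assms, of "length w + i"] by simp
  then show "step A (drop (length w) qs ! i) (x ! i) (drop (length w) qs ! Suc i)"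
    using assms by (auto simp: is_run_def nth_append)
qed

lemma last_take_Suc: "n < length xs \<Longrightarrow> last (take (Suc n) xs) = xs ! n"
  by (simp add: take_Suc_conv_app_nth)

lemma run_last_take:
  assumes "is_run A q (w@x) qs"
  shows "last (take (Suc (length w)) qs) = qs ! length w"
  using assms by (intro last_take_Suc) (auto simp: is_run_def)

lemma run_last_drop:
  assumes "is_run A q (w@x) qs"
  shows "last (drop (length w) qs) = last qs"
  using assms by (auto simp: is_run_def last_drop)

lemma run_app:
  assumes "is_run A q w qs" "is_run A (last qs) x rs"
  shows "is_run A q (w@x) (qs @ tl rs)"
  unfolding is_run_def
proof (intro conjI allI impI)
  have lq: "length qs = Suc (length w)" and lr: "length rs = Suc (length x)"
    using assms by (auto simp: is_run_def)
  show "length (qs @ tl rs) = Suc (length (w @ x))" using lq lr by simp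
  show "(qs @ tl rs) ! 0 = q" using assms(1) lq by (auto simp: is_run_def nth_append)
  fix i assume i: "i < length (w @ x)"
  have lastq: "last qs = qs ! length w" using lq by (rule last_len)
  have r0: "rs ! 0 = last qs" using assms(2) by (simp add: is_run_def)
  show "step A ((qs @ tl rs) ! i) ((w @ x) ! i) ((qs @ tl rs) ! Suc i)"
  proof (cases "i < length w")
    case True
    then show ?thesis using assms(1) lq by (auto simp: is_run_def nth_append)
  next
    case False
    define j where "j = i - length w"
    have ij: "i = length w + j" "j < length x" using False i j_def by auto
    have s: "step A (rs ! j) (x ! j) (rs ! Suc j)" using assms(2) ij(2) by (auto simp: is_run_def)
    have a: "(qs @ tl rs) ! i = rs ! j"
    proof (cases j)
      case 0 then show ?thesis using ij lq r0 lastq by (simp add: nth_append)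
    next
      case (Suc j') then show ?thesis using ij lq lr by (simp add: nth_append nth_tl)
    qed
    have b: "(qs @ tl rs) ! Suc i = rs ! Suc j" using ij lq lr by (simp add: nth_append nth_tl)
    show ?thesis using s a b ij by (simp add: nth_append)
  qed
qed

lemma run_app_last:
  assumes "is_run A q w qs" "is_run A (last qs) x rs"
  shows "last (qs @ tl rs) = last rs"
proof -
  have lr: "length rs = Suc (length x)" using assms by (auto simp: is_run_def)
  have r0: "rs ! 0 = last qs" using assms(2) by (simp add: is_run_def)
  show ?thesis
  proof (cases "tl rs = []")
    case True
    then have "length rs = 1" using lr by (cases rs) auto
    then have "last rs = rs ! 0" by (cases rs) auto
    then show ?thesis using True r0 by simp
  next
    case False
    then show ?thesis using lr by (cases rs) auto
  qed
qed

lemma run_app_nth: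
  assumes "is_run A q w qs"
  shows "(qs @ tl rs) ! length w = last qs"
  using assms last_len[of qs "length w"] by (auto simp: is_run_def nth_append)

lemma succ_word_char:
  "q' \<in> succ_word A {q} w \<longleftrightarrow> (\<exists>qs. is_run A q w qs \<and> last qs = q')"
proof (induction w arbitrary: q' rule: rev_induct)
  case Nil
  have "is_run A q [] qs \<longleftrightarrow> qs = [q]" for qs
    by (auto simp: is_run_def length_Suc_conv)
  then show ?case by (auto simp: succ_word_def)
next
  case (snoc a w)
  have sw: "succ_word A {q} (w @ [a]) = succ A (succ_word A {q} w) a"
    by (simp add: succ_word_def)
  show ?case
  proof
    assume "q' \<in> succ_word A {q} (w @ [a])"
    then obtain s where s: "s \<in> succ_word A {q} w" and st: "step A s a q'"
      unfolding sw succ_def by blast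
    from s snoc obtain qs where r: "is_run A q w qs" and l: "last qs = s" by blast
    have r2: "is_run A (last qs) [a] [s, q']" using st l by (auto simp: is_run_def)
    have "is_run A q (w@[a]) (qs @ tl [s,q'])" by (rule run_app[OF r r2])
    then show "\<exists>qs. is_run A q (w @ [a]) qs \<and> last qs = q'" by auto
  next
    assume "\<exists>qs. is_run A q (w @ [a]) qs \<and> last qs = q'"
    then obtain qs where r: "is_run A q (w @ [a]) qs" and l: "last qs = q'" by blast
    have "take (Suc (length w)) qs ! 0 = q" using run_take[OF r] by (simp add: is_run_def)
    have "qs ! length w \<in> succ_word A {q} w"
      using snoc run_take[OF r] run_last_take[OF r] by blast
    moreover have "step A (qs ! length w) a q'"
    proof -
      have d: "is_run A (qs ! length w) [a] (drop (length w) qs)" by (rule run_drop[OF r])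
      then have "step A (drop (length w) qs ! 0) a (drop (length w) qs ! 1)"
        by (auto simp: is_run_def)
      moreover have "drop (length w) qs ! 1 = last (drop (length w) qs)"
        using d by (auto simp: is_run_def last_conv_nth)
      ultimately show ?thesis using d run_last_drop[OF r] l by (auto simp: is_run_def)
    qed
    ultimately show "q' \<in> succ_word A {q} (w @ [a])" unfolding sw succ_def by blast
  qed
qed


definition regof :: "('r \<Rightarrow> nat option) \<Rightarrow> nat \<Rightarrow> 'r" where
  "regof u0 y = (SOME r. u0 r = Some y)"
definition hh :: "nat \<Rightarrow> ('r \<Rightarrow> nat option) \<Rightarrow> ('r \<Rightarrow> nat option) \<Rightarrow> nat \<Rightarrow> nat" where
  "hh M u0 u y = (if \<exists>r. u0 r = Some y then the (u (regof u0 y)) else 2*y + 2*M + 1)"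
definition XX :: "nat \<Rightarrow> ('r \<Rightarrow> nat option) \<Rightarrow> ('s \<times> nat) list \<Rightarrow> ('r \<Rightarrow> nat option) \<Rightarrow> ('s \<times> nat) list" where
  "XX M u0 x0 u = mapw (hh M u0 u) x0"
definition fresh :: "nat \<Rightarrow> ('r \<Rightarrow> nat) \<Rightarrow> 'r \<Rightarrow> nat" where
  "fresh M e r = 2 * (M + e r)"
definition ug :: "'r set \<Rightarrow> 'r set \<Rightarrow> ('r \<Rightarrow> nat option) \<Rightarrow> nat \<Rightarrow> ('r \<Rightarrow> nat) \<Rightarrow> 'r \<Rightarrow> nat option" where
  "ug D T g M e = (\<lambda>r. if r \<in> T then g r else if r \<in> D then Some (fresh M e r) else None)"
definition ff :: "nat \<Rightarrow> ('r \<Rightarrow> nat) \<Rightarrow> 'r set \<Rightarrow> 'r set \<Rightarrow> ('r \<Rightarrow> nat option) \<Rightarrow> nat \<Rightarrow> nat" where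
  "ff M e D T u' z = (if \<exists>r\<in>D-T. z = fresh M e r then the (u' (SOME r. r \<in> D-T \<and> z = fresh M e r)) else z)"

locale ctx =
  fixes acc :: "('l \<times> ('r::finite \<Rightarrow> nat option)) \<Rightarrow> ('s \<times> nat) list \<Rightarrow> bool"
    and C :: "('l \<times> ('r \<Rightarrow> nat option)) set" and M :: nat
  assumes disj: "q1 \<in> C \<Longrightarrow> q2 \<in> C \<Longrightarrow> acc q1 x \<Longrightarrow> acc q2 x \<Longrightarrow> q1 = q2"
    and cover: "\<exists>q\<in>C. acc q x"
    and small: "q \<in> C \<Longrightarrow> snd q r = Some c \<Longrightarrow> c < M"
    and injC: "q \<in> C \<Longrightarrow> snd q r \<noteq> None \<Longrightarrow> r \<noteq> r' \<Longrightarrow> snd q r \<noteq> snd q r'"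
    and nonempty: "q \<in> C \<Longrightarrow> \<exists>x. acc q x"
    and transport: "acc (l, u) x \<Longrightarrow> inj_on f (vals u \<union> snd ` set x) \<Longrightarrow>
        acc (l, map_option f \<circ> u) (mapw f x)"
begin

definition cnt :: "'l \<Rightarrow> 'r set \<Rightarrow> 'r set \<Rightarrow> ('r \<Rightarrow> nat option) \<Rightarrow> ('r \<Rightarrow> nat option) set" where
  "cnt l D T g = {u. (l, u) \<in> C \<and> {r. u r \<noteq> None} = D \<and> (\<forall>r\<in>T. u r = g r)}"

definition PP where
  "PP u0 x0 e D T g = (SOME p. p \<in> C \<and> acc p (XX M u0 x0 (ug D T g M e)))"

end

locale ctx2 = ctx acc C M for acc :: "('l \<times> ('r::finite \<Rightarrow> nat option)) \<Rightarrow> ('s \<times> nat) list \<Rightarrow> bool"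
    and C M +
  fixes l :: 'l and D :: "'r set" and u0 :: "'r \<Rightarrow> nat option"
    and x0 :: "('s \<times> nat) list" and e :: "'r \<Rightarrow> nat"
  assumes u0C: "(l, u0) \<in> C" and u0D: "{r. u0 r \<noteq> None} = D" and x0: "acc (l, u0) x0"
    and e: "inj e"
begin

definition good :: "('r \<Rightarrow> nat option) \<Rightarrow> bool" where
  "good u \<longleftrightarrow> {r. u r \<noteq> None} = D \<and> (\<forall>r r'. u r \<noteq> None \<longrightarrow> r \<noteq> r' \<longrightarrow> u r \<noteq> u r')
     \<and> (\<forall>r c. u r = Some c \<longrightarrow> c < M \<or> even c)"

lemma u0inj: "u0 r = Some y \<Longrightarrow> u0 r' = Some y \<Longrightarrow> r = r'"
  using injC[OF u0C, of r r'] by auto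

lemma regof: "u0 r = Some y \<Longrightarrow> regof u0 y = r"
  unfolding regof_def by (rule some_equality) (auto intro: u0inj)

lemma hh_in: "u0 r = Some y \<Longrightarrow> hh M u0 u y = the (u r)"
  by (auto simp: hh_def regof)

lemma hh_out: "\<forall>r. u0 r \<noteq> Some y \<Longrightarrow> hh M u0 u y = 2*y + 2*M + 1"
  by (auto simp: hh_def)

lemma hh_inj:
  assumes g: "good u"
  shows "inj (hh M u0 u)"
proof (rule injI)
  fix y1 y2 assume eq: "hh M u0 u y1 = hh M u0 u y2"
  have dom: "u0 r \<noteq> None \<Longrightarrow> u r \<noteq> None" for r using g u0D unfolding good_def by blast
  have ij: "u r \<noteq> None \<Longrightarrow> u r = u r' \<Longrightarrow> r = r'" for r r' using g unfolding good_def by blast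
  have val: "u r = Some c \<Longrightarrow> c < M \<or> even c" for r c using g unfolding good_def by blast
  show "y1 = y2"
  proof (cases "\<exists>r. u0 r = Some y1")
    case True
    then obtain r1 where r1: "u0 r1 = Some y1" by blast
    then obtain c1 where c1: "u r1 = Some c1" using dom[of r1] by auto
    show ?thesis
    proof (cases "\<exists>r. u0 r = Some y2")
      case True
      then obtain r2 where r2: "u0 r2 = Some y2" by blast
      then obtain c2 where c2: "u r2 = Some c2" using dom[of r2] by auto
      have "c1 = c2" using eq hh_in[OF r1] hh_in[OF r2] c1 c2 by simp
      then have "r1 = r2" using ij[of r1 r2] c1 c2 by simp
      then show ?thesis using r1 r2 by simp
    next
      case False
      have "c1 = 2*y2 + 2*M + 1" using eq hh_in[OF r1] hh_out[of y2] False c1 by simp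
      then show ?thesis using val[OF c1] by presburger
    qed
  next
    case False
    show ?thesis
    proof (cases "\<exists>r. u0 r = Some y2")
      case True
      then obtain r2 where r2: "u0 r2 = Some y2" by blast
      then obtain c2 where c2: "u r2 = Some c2" using dom[of r2] by auto
      have "c2 = 2*y1 + 2*M + 1" using eq hh_in[OF r2] hh_out[of y1] False c2 by simp
      then show ?thesis using val[OF c2] by presburger
    next
      case False2: False
      show ?thesis using eq hh_out[of y1] hh_out[of y2] False False2 by auto
    qed
  qed
qed

lemma mo_hh:
  assumes g: "good u"
  shows "map_option (hh M u0 u) \<circ> u0 = u"
proof
  fix r
  show "(map_option (hh M u0 u) \<circ> u0) r = u r"
  proof (cases "u0 r")
    case None
    then have "u r = None" using g u0D unfolding good_def by blast
    then show ?thesis using None by simp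
  next
    case (Some y)
    then have "u r \<noteq> None" using g u0D unfolding good_def by blast
    then show ?thesis using Some hh_in[OF Some] by auto
  qed
qed

lemma acc_X:
  assumes g: "good u"
  shows "acc (l, u) (XX M u0 x0 u)"
proof -
  have "inj_on (hh M u0 u) (vals u0 \<union> snd ` set x0)"
    using hh_inj[OF g] by (rule inj_on_subset) simp
  from transport[OF x0 this] show ?thesis using mo_hh[OF g] by (simp add: XX_def)
qed

lemma goodC: "(l, u) \<in> C \<Longrightarrow> {r. u r \<noteq> None} = D \<Longrightarrow> good u"
  unfolding good_def using injC[of "(l,u)"] small[of "(l,u)"] by auto

lemma fresh_inj: "fresh M e r = fresh M e r' \<Longrightarrow> r = r'"
  using e unfolding fresh_def inj_def by auto

lemma ff_fresh: "r \<in> D - T \<Longrightarrow> ff M e D T u' (fresh M e r) = the (u' r)"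
proof -
  assume r: "r \<in> D - T"
  have "(SOME r'. r' \<in> D - T \<and> fresh M e r = fresh M e r') = r"
    by (rule some_equality) (use r fresh_inj in auto)
  then show ?thesis using r unfolding ff_def by auto
qed

lemma ff_other: "(\<forall>r\<in>D-T. z \<noteq> fresh M e r) \<Longrightarrow> ff M e D T u' z = z"
  unfolding ff_def by auto

lemma key:
  assumes T: "T \<subseteq> D" "T \<noteq> D" and u': "u' \<in> cnt l D T g"
  shows "\<exists>r\<in>D-T. \<exists>r'. snd (PP u0 x0 e D T g) r' = u' r"
proof (rule ccontr)
  assume H: "\<not> ?thesis"
  define p where "p = PP u0 x0 e D T g"
  define u'' where "u'' = ug D T g M e"
  define f where "f = ff M e D T u'"
  have "\<exists>p. p \<in> C \<and> acc p (XX M u0 x0 u'')" using cover by blast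
  then have p: "p \<in> C" "acc p (XX M u0 x0 u'')" unfolding p_def PP_def u''_def
    by (metis (mono_tags, lifting) someI_ex)+
  have u'C: "(l, u') \<in> C" and u'D: "{r. u' r \<noteq> None} = D" and u'g: "\<forall>r\<in>T. u' r = g r"
    using u' unfolding cnt_def by auto
  have gu': "good u'" using goodC[OF u'C u'D] .
  have u'lt: "u' r = Some c \<Longrightarrow> c < M" for r c using small[OF u'C] by auto
  have u'ij: "u' r \<noteq> None \<Longrightarrow> u' r = u' r' \<Longrightarrow> r = r'" for r r'
    using injC[OF u'C, of r r'] by auto
  have H': "\<And>r r'. r \<in> D - T \<Longrightarrow> snd p r' \<noteq> u' r" using H p_def by blast
  have plt: "snd p r = Some c \<Longrightarrow> c < M" for r c using small[OF p(1)] by auto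
  have freshM: "M \<le> fresh M e r" for r by (simp add: fresh_def)
  have fresh_even: "even (fresh M e r)" for r by (simp add: fresh_def)
  have dataX: "z \<in> snd ` set (XX M u0 x0 u'') \<Longrightarrow>
      (\<exists>r\<in>T. u' r = Some z) \<or> (\<exists>r\<in>D-T. z = fresh M e r) \<or> (M \<le> z \<and> odd z)" for z
  proof -
    assume "z \<in> snd ` set (XX M u0 x0 u'')"
    then obtain y where z: "z = hh M u0 u'' y" unfolding XX_def mapw_def by auto
    show ?thesis
    proof (cases "\<exists>r. u0 r = Some y")
      case True
      then obtain r where r: "u0 r = Some y" by blast
      have rD: "r \<in> D" using r u0D by auto
      show ?thesis
      proof (cases "r \<in> T")
        case True
        then have "u' r \<noteq> None" using rD u'D by auto
        then have "u' r = Some z" using z hh_in[OF r] True u'g unfolding u''_def ug_def by auto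
        then show ?thesis using True by blast
      next
        case False
        then have "z = fresh M e r" using z hh_in[OF r] rD unfolding u''_def ug_def by auto
        then show ?thesis using False rD by blast
      qed
    next
      case False
      then have "z = 2*y + 2*M + 1" using z hh_out by auto
      then have "M \<le> z \<and> odd z" by presburger
      then show ?thesis by blast
    qed
  qed
  have nonfresh: "f z = z \<and> (\<forall>r\<in>D-T. u' r \<noteq> Some z)"
    if zV: "z \<in> vals (snd p) \<union> snd ` set (XX M u0 x0 u'')" and nf: "\<forall>r\<in>D-T. z \<noteq> fresh M e r" for z
  proof
    show "f z = z" unfolding f_def using ff_other[OF nf] .
    show "\<forall>r\<in>D-T. u' r \<noteq> Some z"
    proof (intro ballI notI)
      fix r assume r: "r \<in> D - T" and ur: "u' r = Some z"
      from zV show False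
      proof
        assume "z \<in> vals (snd p)"
        then obtain r' where "snd p r' = Some z" unfolding vals_def by auto
        then show False using H'[OF r, of r'] ur by simp
      next
        assume "z \<in> snd ` set (XX M u0 x0 u'')"
        from dataX[OF this] show False
        proof (elim disjE)
          assume "\<exists>r\<in>T. u' r = Some z"
          then obtain r0 where "r0 \<in> T" "u' r0 = Some z" by blast
          then show False using u'ij[of r r0] ur r by auto
        next
          assume "\<exists>r\<in>D-T. z = fresh M e r" then show False using nf by blast
        next
          assume "M \<le> z \<and> odd z" then show False using u'lt[OF ur] by simp
        qed
      qed
    qed
  qed
  have isfresh: "u' r = Some (f z)" if r: "r \<in> D - T" and z: "z = fresh M e r" for z r
  proof -
    have "u' r \<noteq> None" using r u'D by auto
    then show ?thesis unfolding f_def z using ff_fresh[OF r] by auto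
  qed
  have inj: "inj_on f (vals (snd p) \<union> snd ` set (XX M u0 x0 u''))"
  proof (rule inj_onI)
    fix z1 z2 assume z1: "z1 \<in> vals (snd p) \<union> snd ` set (XX M u0 x0 u'')"
      and z2: "z2 \<in> vals (snd p) \<union> snd ` set (XX M u0 x0 u'')" and eq: "f z1 = f z2"
    show "z1 = z2"
    proof (cases "\<exists>r\<in>D-T. z1 = fresh M e r")
      case True
      then obtain r1 where r1: "r1 \<in> D - T" "z1 = fresh M e r1" by blast
      show ?thesis
      proof (cases "\<exists>r\<in>D-T. z2 = fresh M e r")
        case True
        then obtain r2 where r2: "r2 \<in> D - T" "z2 = fresh M e r2" by blast
        have "u' r1 = u' r2" using isfresh[OF r1] isfresh[OF r2] eq by metis
        then have "r1 = r2" using u'ij[of r1 r2] isfresh[OF r1] by blast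
        then show ?thesis using r1 r2 by simp
      next
        case False
        have "u' r1 = Some z2" using isfresh[OF r1] eq nonfresh[OF z2] False by auto
        then show ?thesis using nonfresh[OF z2] False r1 by blast
      qed
    next
      case False
      show ?thesis
      proof (cases "\<exists>r\<in>D-T. z2 = fresh M e r")
        case True
        then obtain r2 where r2: "r2 \<in> D - T" "z2 = fresh M e r2" by blast
        have "u' r2 = Some z1" using isfresh[OF r2] eq nonfresh[OF z1] False by auto
        then show ?thesis using nonfresh[OF z1] False r2 by blast
      next
        case False2: False
        show ?thesis using nonfresh[OF z1] nonfresh[OF z2] False False2 eq by auto
      qed
    qed
  qed
  have tp: "acc (fst p, map_option f \<circ> snd p) (mapw f (XX M u0 x0 u''))"
    using transport[of "fst p" "snd p", OF _ inj] p(2) by simp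
  have sp: "map_option f \<circ> snd p = snd p"
  proof
    fix r show "(map_option f \<circ> snd p) r = snd p r"
    proof (cases "snd p r")
      case (Some c)
      then have "c < M" using plt by simp
      then have "\<forall>r\<in>D-T. c \<noteq> fresh M e r" using freshM by (metis leD)
      then show ?thesis using Some unfolding f_def by (simp add: ff_other)
    qed simp
  qed
  have fh: "f (hh M u0 u'' y) = hh M u0 u' y" for y
  proof (cases "\<exists>r. u0 r = Some y")
    case True
    then obtain r where r: "u0 r = Some y" by blast
    have rD: "r \<in> D" using r u0D by auto
    show ?thesis
    proof (cases "r \<in> T")
      case True
      then obtain c where c: "u' r = Some c" using rD u'D by auto
      have "c < M" using u'lt[OF c] .
      then have "\<forall>r\<in>D-T. c \<noteq> fresh M e r" using freshM by (metis leD)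
      then show ?thesis using hh_in[OF r] True u'g c unfolding u''_def ug_def f_def
        by (simp add: ff_other)
    next
      case False
      then show ?thesis using hh_in[OF r] rD ff_fresh[of r T u'] unfolding u''_def ug_def f_def
        by simp
    qed
  next
    case False
    then have y: "\<forall>r. u0 r \<noteq> Some y" by blast
    have "\<forall>r\<in>D-T. 2*y + 2*M + 1 \<noteq> fresh M e r" 
    proof (intro ballI)
      fix r have "2*y + 2*M + 1 \<noteq> 2 * (M + e r)" by presburger
      then show "2*y + 2*M + 1 \<noteq> fresh M e r" by (simp add: fresh_def)
    qed
    then show ?thesis using hh_out[OF y, of u''] hh_out[OF y, of u'] unfolding f_def
      by (simp add: ff_other)
  qed
  have "mapw f (XX M u0 x0 u'') = XX M u0 x0 u'"
    unfolding XX_def mapw_def using fh by simp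
  then have accp: "acc p (XX M u0 x0 u')" using tp sp by simp
  have "p = (l, u')" using disj[OF p(1) u'C accp acc_X[OF gu']] .
  moreover obtain r where r: "r \<in> D - T" using T by blast
  ultimately show False using H'[OF r, of r] by simp
qed

end


context ctx2
begin

lemma count:
  "card (D - T) = n \<Longrightarrow> T \<subseteq> D \<Longrightarrow>
   finite (cnt l D T g) \<and> card (cnt l D T g) \<le> fact n * card (UNIV :: 'r set) ^ n"
proof (induction n arbitrary: T g)
  case 0
  have fD: "finite (D - T)" by simp
  then have "D - T = {}" using 0 by simp
  then have TD: "T = D" using 0 by auto
  have sub0: "cnt l D T g \<subseteq> {\<lambda>r. if r \<in> D then g r else None}"
  proof
    fix u assume "u \<in> cnt l D T g"
    then have "{r. u r \<noteq> None} = D" "\<forall>r\<in>T. u r = g r" unfolding cnt_def by auto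
    then have "u = (\<lambda>r. if r \<in> D then g r else None)" using TD by (auto intro!: ext)
    then show "u \<in> {\<lambda>r. if r \<in> D then g r else None}" by simp
  qed
  have f1: "finite (cnt l D T g)" using sub0 by (rule finite_subset) simp
  have "card (cnt l D T g) \<le> card {\<lambda>r. if r \<in> D then g r else None}"
    using sub0 by (rule card_mono[rotated]) simp
  then show ?case using f1 by simp
next
  case (Suc n)
  define p where "p = PP u0 x0 e D T g"
  define S where "S = (\<lambda>r r'. cnt l D (insert r T) (g(r := snd p r')))"
  have TD: "T \<noteq> D" using Suc.prems by auto
  have sub: "cnt l D T g \<subseteq> (\<Union>r\<in>D-T. \<Union>r'\<in>UNIV. S r r')"
  proof
    fix u assume u: "u \<in> cnt l D T g"
    obtain r r' where r: "r \<in> D - T" and rr: "snd p r' = u r"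
      using key[OF Suc.prems(2) TD u] p_def by blast
    have "u \<in> S r r'" using u rr unfolding S_def cnt_def by auto
    then show "u \<in> (\<Union>r\<in>D-T. \<Union>r'\<in>UNIV. S r r')" using r by blast
  qed
  have IH: "finite (S r r') \<and> card (S r r') \<le> fact n * card (UNIV :: 'r set) ^ n" if r: "r \<in> D - T" for r r'
  proof -
    have "card (D - insert r T) = n"
    proof -
      have "D - insert r T = (D - T) - {r}" by auto
      then show ?thesis using Suc.prems(1) r by (simp add: card_Diff_singleton)
    qed
    moreover have "insert r T \<subseteq> D" using r Suc.prems(2) by auto
    ultimately show ?thesis unfolding S_def using Suc.IH by blast
  qed
  have fin: "finite (\<Union>r\<in>D-T. \<Union>r'\<in>UNIV. S r r')" using IH by auto
  have "card (\<Union>r\<in>D-T. \<Union>r'\<in>UNIV. S r r') \<le> (\<Sum>r\<in>D-T. card (\<Union>r'\<in>UNIV. S r r'))"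
    by (rule card_UN_le) simp
  also have "\<dots> \<le> (\<Sum>r\<in>D-T. card (UNIV :: 'r set) * (fact n * card (UNIV :: 'r set) ^ n))"
  proof (rule sum_mono)
    fix r assume r: "r \<in> D - T"
    have "card (\<Union>r'\<in>UNIV. S r r') \<le> (\<Sum>r'\<in>UNIV. card (S r r'))"
      by (rule card_UN_le) simp
    also have "\<dots> \<le> (\<Sum>r'\<in>(UNIV::'r set). fact n * card (UNIV :: 'r set) ^ n)"
      by (rule sum_mono) (use IH[OF r] in blast)
    also have "\<dots> = card (UNIV :: 'r set) * (fact n * card (UNIV :: 'r set) ^ n)" by simp
    finally show "card (\<Union>r'\<in>UNIV. S r r') \<le> card (UNIV :: 'r set) * (fact n * card (UNIV :: 'r set) ^ n)" .
  qed
  also have "\<dots> = Suc n * (card (UNIV :: 'r set) * (fact n * card (UNIV :: 'r set) ^ n))" using Suc.prems(1) by simp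
  also have "\<dots> = fact (Suc n) * card (UNIV :: 'r set) ^ Suc n" by (simp add: algebra_simps)
  finally have "card (\<Union>r\<in>D-T. \<Union>r'\<in>UNIV. S r r') \<le> fact (Suc n) * card (UNIV :: 'r set) ^ Suc n" .
  then show ?case using sub fin card_mono[OF fin sub] finite_subset[OF sub fin] by simp
qed

end

context ctx
begin

lemma each_bound:
  "finite (cnt l D {} g) \<and> card (cnt l D {} g) \<le> fact (card (UNIV :: 'r set)) * card (UNIV :: 'r set) ^ (card (UNIV :: 'r set))"
proof (cases "cnt l D {} g = {}")
  case True then show ?thesis by simp
next
  case False
  then obtain u0 where u0: "u0 \<in> cnt l D {} g" by blast
  then have u0C: "(l, u0) \<in> C" and u0D: "{r. u0 r \<noteq> None} = D" unfolding cnt_def by auto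
  obtain x0 where x0: "acc (l, u0) x0" using nonempty[OF u0C] by auto
  obtain e :: "'r \<Rightarrow> nat" and n where "e ` UNIV = {i. i < n}" "inj_on e UNIV"
    using finite_imp_inj_to_nat_seg[of "UNIV :: 'r set"] by auto
  then have e: "inj e" by simp
  interpret c2: ctx2 acc C M l D u0 x0 e
    by unfold_locales (use u0C u0D x0 e in auto)
  have "finite (cnt l D {} g) \<and> card (cnt l D {} g) \<le> fact (card D) * card (UNIV :: 'r set) ^ card D"
    using c2.count[of "{}" "card D" g] by simp
  moreover have "fact (card D) * card (UNIV :: 'r set) ^ card D \<le> fact (card (UNIV :: 'r set)) * card (UNIV :: 'r set) ^ (card (UNIV :: 'r set))"
  proof (rule mult_le_mono)
    have cD: "card D \<le> card (UNIV :: 'r set)" by (rule card_mono) auto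
    show "fact (card D) \<le> (fact (card (UNIV :: 'r set)) :: nat)" by (rule fact_mono[OF cD])
    have "card (UNIV :: 'r set) > 0" by (simp add: finite_UNIV_card_ge_0)
    then show "card (UNIV :: 'r set) ^ card D \<le> card (UNIV :: 'r set) ^ (card (UNIV :: 'r set))"
      by (intro power_increasing cD) simp
  qed
  ultimately show ?thesis by linarith
qed

lemma loc_bound:
  "finite {q \<in> C. fst q = l} \<and>
   card {q \<in> C. fst q = l} \<le> 2 ^ (card (UNIV :: 'r set)) * (fact (card (UNIV :: 'r set)) * card (UNIV :: 'r set) ^ (card (UNIV :: 'r set)))"
proof -
  define B where "B = fact (card (UNIV :: 'r set)) * card (UNIV :: 'r set) ^ (card (UNIV :: 'r set))"
  define Z where "Z = (\<Union>D\<in>(UNIV :: 'r set set). cnt l D {} (\<lambda>_. None))"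
  have sub: "{q \<in> C. fst q = l} \<subseteq> (\<lambda>u. (l, u)) ` Z"
  proof
    fix q assume "q \<in> {q \<in> C. fst q = l}"
    then have "snd q \<in> cnt l {r. snd q r \<noteq> None} {} (\<lambda>_. None)" "q = (l, snd q)"
      unfolding cnt_def by (auto intro: prod_eqI)
    then show "q \<in> (\<lambda>u. (l, u)) ` Z" unfolding Z_def by blast
  qed
  have finZ: "finite Z" unfolding Z_def using each_bound by auto
  have "card Z \<le> (\<Sum>D\<in>(UNIV :: 'r set set). card (cnt l D {} (\<lambda>_. None)))"
    unfolding Z_def by (rule card_UN_le) simp
  also have "\<dots> \<le> (\<Sum>D\<in>(UNIV :: 'r set set). B)"
    by (rule sum_mono) (use each_bound B_def in blast)
  also have "\<dots> = 2 ^ (card (UNIV :: 'r set)) * B"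
  proof -
    have "card (UNIV :: 'r set set) = 2 ^ (card (UNIV :: 'r set))"
      using card_Pow[of "UNIV :: 'r set"] by (simp add: Pow_UNIV)
    then show ?thesis by simp
  qed
  finally have cZ: "card Z \<le> 2 ^ (card (UNIV :: 'r set)) * B" .
  have fin: "finite ((\<lambda>u. (l, u)) ` Z)" using finZ by simp
  have "card {q \<in> C. fst q = l} \<le> card ((\<lambda>u. (l, u)) ` Z)" by (rule card_mono[OF fin sub])
  also have "\<dots> \<le> card Z" by (rule card_image_le[OF finZ])
  finally show ?thesis using cZ finite_subset[OF sub fin] B_def by simp
qed

end


lemma arith_bound:
  fixes K :: nat assumes K: "1 \<le> K"
  shows "2 ^ K * (fact K * K ^ K) \<le> (K * 4 ^ K * fact K) ^ K"
proof -
  have a: "(2::nat) ^ K \<le> (4 ^ K) ^ K"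
  proof -
    have "(2::nat) ^ K \<le> 4 ^ K" by (rule power_mono) auto
    also have "(4::nat) ^ K = (4 ^ K) ^ 1" by simp
    also have "\<dots> \<le> (4 ^ K) ^ K" by (rule power_increasing[OF K]) simp
    finally show ?thesis .
  qed
  have b: "(fact K :: nat) \<le> (fact K) ^ K"
  proof -
    have "(fact K :: nat) = (fact K) ^ 1" by simp
    also have "\<dots> \<le> (fact K) ^ K" by (rule power_increasing[OF K]) (simp add: fact_ge_1)
    finally show ?thesis .
  qed
  have "2 ^ K * (fact K * K ^ K) = K ^ K * (2 ^ K * fact K)" by (simp add: algebra_simps)
  also have "\<dots> \<le> K ^ K * ((4 ^ K) ^ K * (fact K) ^ K)"
    by (intro mult_le_mono2 mult_le_mono a b)
  also have "\<dots> = (K * 4 ^ K * fact K) ^ K" by (simp add: power_mult_distrib)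
  finally show ?thesis .
qed

lemma inst:
  assumes ra: "is_ra A" and un: "unambiguous A" and cl: "clean A" and uv: "universal A"
  shows "ctx (accepts_from A) (succ_word A {init_state A} w) (Suc (Max (insert 0 (snd ` set w))))"
proof
  let ?C = "succ_word A {init_state A} w"
  fix q1 q2 x assume q1: "q1 \<in> ?C" and q2: "q2 \<in> ?C" and a1: "accepts_from A q1 x"
    and a2: "accepts_from A q2 x"
  obtain qs1 where r1: "is_run A (init_state A) w qs1" and l1: "last qs1 = q1"
    using q1 succ_word_char by metis
  obtain qs2 where r2: "is_run A (init_state A) w qs2" and l2: "last qs2 = q2"
    using q2 succ_word_char by metis
  obtain rs1 where s1: "is_run A (last qs1) x rs1" "fst (last rs1) \<in> lacc A"
    using a1 l1 unfolding accepts_from_def accepting_run_def by blast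
  obtain rs2 where s2: "is_run A (last qs2) x rs2" "fst (last rs2) \<in> lacc A"
    using a2 l2 unfolding accepts_from_def accepting_run_def by blast
  have "accepting_run A (init_state A) (w @ x) (qs1 @ tl rs1)"
    unfolding accepting_run_def using run_app[OF r1 s1(1)] run_app_last[OF r1 s1(1)] s1(2) by simp
  moreover have "accepting_run A (init_state A) (w @ x) (qs2 @ tl rs2)"
    unfolding accepting_run_def using run_app[OF r2 s2(1)] run_app_last[OF r2 s2(1)] s2(2) by simp
  ultimately have "qs1 @ tl rs1 = qs2 @ tl rs2" using un unfolding unambiguous_def by blast
  then show "q1 = q2" using run_app_nth[OF r1, of rs1] run_app_nth[OF r2, of rs2] l1 l2 by simp
next
  let ?C = "succ_word A {init_state A} w"
  fix x
  obtain qs where r: "is_run A (init_state A) (w @ x) qs" and a: "fst (last qs) \<in> lacc A"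
    using uv unfolding universal_def accepts_from_def accepting_run_def by blast
  have "qs ! length w \<in> ?C" using succ_word_char run_take[OF r] run_last_take[OF r] by metis
  moreover have "accepts_from A (qs ! length w) x"
    unfolding accepts_from_def accepting_run_def using run_drop[OF r] run_last_drop[OF r] a by auto
  ultimately show "\<exists>q\<in>?C. accepts_from A q x" by blast
next
  let ?C = "succ_word A {init_state A} w"
  fix q r c assume q: "q \<in> ?C" and c: "snd q r = Some c"
  obtain qs where r: "is_run A (init_state A) w qs" and l: "last qs = q"
    using q succ_word_char by metis
  have len: "length qs = Suc (length w)" using r by (simp add: is_run_def)
  have "vals (snd (qs ! length w)) \<subseteq> vals (snd (init_state A)) \<union> snd ` set w"
    using run_vals[OF ra r, of "length w"] len by simp
  moreover have "qs ! length w = q" using l last_len[OF len] by simp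
  moreover have "vals (snd (init_state A)) = {}" by (simp add: vals_def init_state_def)
  ultimately have "c \<in> snd ` set w" using c unfolding vals_def by auto
  then have "c \<le> Max (insert 0 (snd ` set w))" by simp
  then show "c < Suc (Max (insert 0 (snd ` set w)))" by simp
next
  let ?C = "succ_word A {init_state A} w"
  fix q r r' assume q: "q \<in> ?C" "snd q r \<noteq> None" "r \<noteq> r'"
  have "reachable_state A q" using q(1) succ_word_char unfolding reachable_state_def by metis
  then show "snd q r \<noteq> snd q r'" using cl q unfolding clean_def by blast
next
  let ?C = "succ_word A {init_state A} w"
  fix q assume q: "q \<in> ?C"
  have "reachable_state A q" using q(1) succ_word_char unfolding reachable_state_def by metis
  then show "\<exists>x. accepts_from A q x" using cl unfolding clean_def by blast
next
  fix l u x and f :: "nat \<Rightarrow> nat" assume h: "accepts_from A (l, u) x" "inj_on f (vals u \<union> snd ` set x)"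
  from accepts_map[OF ra, of "(l,u)" x f] h show "accepts_from A (l, map_option f \<circ> u) (mapw f x)"
    by (simp add: mapst_def)
qed

theorem lemma1:
  fixes A :: "('r::finite, 'l, 's::finite) ra"
    and C :: "('l, 'r) state set"
    and l :: 'l
  assumes "is_ra A"
    and "unambiguous A"
    and "clean A"
    and "universal A"
    and "reachable_config A C"
    and "l \<in> locs A"
  shows "finite {q \<in> C. fst q = l} \<and>
         card {q \<in> C. fst q = l} \<le> (card (UNIV :: 'r set) * 4 ^ card (UNIV :: 'r set) * fact (card (UNIV :: 'r set)) :: nat) ^ card (UNIV :: 'r set)"
proof -
  obtain w where w: "C = succ_word A {init_state A} w"
    using assms(5) unfolding reachable_config_def by blast
  interpret c: ctx "accepts_from A" "succ_word A {init_state A} w" "Suc (Max (insert 0 (snd ` set w)))"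
    by (rule inst[OF assms(1-4)])
  have K: "1 \<le> card (UNIV :: 'r set)" using finite_UNIV_card_ge_0[where 'a='r] by simp
  show ?thesis using c.loc_bound[of l] arith_bound[OF K] w by simp
qed

end
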